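(* Let $A=(A(i,j))_{i,j\in\mathbb{N}}$ be an infinite matrix with entries in $\{0,1\}$, let $(X,\mu)$ be a $\sigma$-finite measure space, and let $(\{f_i\}_{i=1}^\infty,\{D_i\}_{i=1}^\infty)$ together with a nonsingular transformation $F:X\to X$ be an $A_\infty$-branching system on $(X,\mu)$. Then there exists a $*$-homomorphism $\pi:O_A\rightarrow \mathcal{B}(L_2(X,\mu))$ such that for every $i\in\mathbb{N}$ and every $\phi\in L_2(X,\mu)$, $$\pi(S_i)\phi=\chi_{R_i}\cdot(\Phi_{f_i^{-1}})^{1/2}\cdot(\phi\circ F).$$
   Context: Notation: for measurable $Y,Z\subseteq X$, write $Y\stackrel{\mu\text{-a.e.}}{=}Z$ if $\mu(Y\setminus Z)=0=\mu(Z\setminus Y)$. For a measurable map $h$ on a measurable set $W$, $\mu\circ h$ is the measure $E\mapsto\mu(h(E))$ on $W$. For finite $U,V\subseteq\mathbb{N}$ and $j\in\mathbb{N}$ put $A(U,V,j)=\prod_{u\in U}A(u,j)\prod_{v\in V}(1-A(v,j))$. A transformation $F$ is nonsingular if $\mu(F^{-1}(E))=0$ whenever $\mu(E)=0$. An $A_\infty$-branching system on $(X,\mu)$ is a family $(\{f_i\}_{i=1}^\infty,\{D_i\}_{i=1}^\infty)$ together with a nonsingular transformation $F:X\to X$ such that: (1) $f_i:D_i\to R_i$ is measurable, $D_i,R_i$ are measurable subsets of $X$, and $f_i(D_i)\stackrel{\mu\text{-a.e.}}{=}R_i$ for each $i$; (2) $F\circ f_i=\mathrm{id}_{D_i}$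 $\mu$-a.e. on $D_i$ for each $i$; (3) $\mu(R_i\cap R_j)=0$ for $i\neq j$; (4) $\mu(R_j\cap D_i)=0$ if $A(i,j)=0$ and $\mu(R_j\setminus D_i)=0$ if $A(i,j)=1$; (5) for each pair $U,V$ of finite subsets of $\mathbb{N}$ such that $A(U,V,j)=1$ for only finitely many $j$, $\bigcap_{u\in U}D_u\cap\bigcap_{v\in V}(X\setminus D_v)\stackrel{\mu\text{-a.e.}}{=}\bigcup_{j:A(U,V,j)=1}R_j$; (6) there exist the Radon-Nikodym derivatives $\Phi_{f_i}$ of $\mu\circ f_i$ with respect to $\mu$ on $D_i$ and $\Phi_{f_i^{-1}}$ of $\mu\circ f_i^{-1}$ with respect to $\mu$ on $R_i$, where $f_i^{-1}:=F|_{R_i}$. The functions $\Phi_{f_i}$, $\Phi_{f_i^{-1}}$ are regarded as functions on $X$ by setting them equal to $0$ outside $D_i$, respectively $R_i$. $O_A$ is the unital universal C*-algebra generated by partial isometries $\{S_i\}_{i\in\mathbb{N}}$ subject to: (i) $S_iS_i^*S_jS_j^*=0$ for $i\neq j$; (ii) $S_i^*S_i$ and $S_j^*S_j$ commute for all $i,j$; (iii) $S_i^*S_iS_jS_j^*=A(i,j)S_jS_j^*$ for all $i,j$; (iv) $\prod_{u\in U}S_u^*S_u\prod_{v\in V}(1-S_v^*S_v)=\sum_{j}A(U,V,j)S_jS_j^*$ for each pair of finite $U,V\subseteq\mathbb{N}$ such that $A(U,V,j)$ vanishes for all but finitely many $j$. *)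

theory Defs
  imports "HOL-Analysis.Analysis"
begin

definition ae_set_eq :: "'a measure \<Rightarrow> 'a set \<Rightarrow> 'a set \<Rightarrow> bool" where
  "ae_set_eq M Y Z \<longleftrightarrow> Y \<in> sets M \<and> Z \<in> sets M \<and>
     emeasure M (Y - Z) = 0 \<and> emeasure M (Z - Y) = 0"

definition nonsingular :: "'a measure \<Rightarrow> ('a \<Rightarrow> 'a) \<Rightarrow> bool" where
  "nonsingular M F \<longleftrightarrow> F \<in> measurable M M \<and>
     (\<forall>E\<in>sets M. emeasure M E = 0 \<longrightarrow> emeasure M (F -` E \<inter> space M) = 0)"

definition Acoef :: "(nat \<Rightarrow> nat \<Rightarrow> nat) \<Rightarrow> nat set \<Rightarrow> nat set \<Rightarrow> nat \<Rightarrow> nat" where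
  "Acoef A U V j = (\<Prod>u\<in>U. A u j) * (\<Prod>v\<in>V. 1 - A v j)"

definition is_RN_deriv_on :: "'a measure \<Rightarrow> 'a set \<Rightarrow> ('a \<Rightarrow> 'a) \<Rightarrow> ('a \<Rightarrow> real) \<Rightarrow> bool" where
  "is_RN_deriv_on M W h g \<longleftrightarrow> g \<in> borel_measurable M \<and> (\<forall>x. 0 \<le> g x) \<and>
     (\<forall>x. x \<notin> W \<longrightarrow> g x = 0) \<and>
     (\<forall>E\<in>sets M. E \<subseteq> W \<longrightarrow> h ` E \<in> sets M \<and>
        emeasure M (h ` E) = (\<integral>\<^sup>+ x. ennreal (g x) * indicator E x \<partial>M))"

text \<open>A-infinity branching system (f_i, D_i) with ranges R_i, transformation F, and
  the Radon-Nikodym derivatives Phi_{f_i} (Phif i) and Phi_{f_i^{-1}} (Phiinv i).\<close>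
definition branching_system ::
  "'a measure \<Rightarrow> (nat \<Rightarrow> nat \<Rightarrow> nat) \<Rightarrow> (nat \<Rightarrow> 'a \<Rightarrow> 'a) \<Rightarrow> (nat \<Rightarrow> 'a set) \<Rightarrow>
   (nat \<Rightarrow> 'a set) \<Rightarrow> ('a \<Rightarrow> 'a) \<Rightarrow> (nat \<Rightarrow> 'a \<Rightarrow> real) \<Rightarrow> (nat \<Rightarrow> 'a \<Rightarrow> real) \<Rightarrow> bool" where
  "branching_system M A f D R F Phif Phiinv \<longleftrightarrow>
     nonsingular M F \<and>
     (\<forall>i. D i \<in> sets M \<and> R i \<in> sets M \<and> f i \<in> measurable (restrict_space M (D i)) M \<and>
          f i ` D i \<subseteq> R i \<and> ae_set_eq M (f i ` D i) (R i)) \<and>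
     (\<forall>i. AE x in M. x \<in> D i \<longrightarrow> F (f i x) = x) \<and>
     (\<forall>i j. i \<noteq> j \<longrightarrow> emeasure M (R i \<inter> R j) = 0) \<and>
     (\<forall>i j. (A i j = 0 \<longrightarrow> emeasure M (R j \<inter> D i) = 0) \<and>
            (A i j = 1 \<longrightarrow> emeasure M (R j - D i) = 0)) \<and>
     (\<forall>U V. finite U \<and> finite V \<and> finite {j. Acoef A U V j = 1} \<longrightarrow>
        ae_set_eq M (space M \<inter> (\<Inter>u\<in>U. D u) \<inter> (\<Inter>v\<in>V. space M - D v))
                    (\<Union>j\<in>{j. Acoef A U V j = 1}. R j)) \<and>
     (\<forall>i. is_RN_deriv_on M (D i) (f i) (Phif i)) \<and>
     (\<forall>i. is_RN_deriv_on M (R i) F (Phiinv i))"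

text \<open>Elements of L2 are represented by square-integrable measurable complex functions;
  equality in L2 is equality almost everywhere.\<close>
type_synonym 'a op = "('a \<Rightarrow> complex) \<Rightarrow> ('a \<Rightarrow> complex)"

definition L2 :: "'a measure \<Rightarrow> ('a \<Rightarrow> complex) set" where
  "L2 M = {\<phi>. \<phi> \<in> borel_measurable M \<and> integrable M (\<lambda>x. (cmod (\<phi> x))\<^sup>2)}"

definition ae_eq :: "'a measure \<Rightarrow> ('a \<Rightarrow> complex) \<Rightarrow> ('a \<Rightarrow> complex) \<Rightarrow> bool" where
  "ae_eq M \<phi> \<psi> \<longleftrightarrow> (AE x in M. \<phi> x = \<psi> x)"

definition l2_inner :: "'a measure \<Rightarrow> ('a \<Rightarrow> complex) \<Rightarrow> ('a \<Rightarrow> complex) \<Rightarrow> complex" where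
  "l2_inner M \<phi> \<psi> = (LINT x|M. \<phi> x * cnj (\<psi> x))"

definition l2_norm :: "'a measure \<Rightarrow> ('a \<Rightarrow> complex) \<Rightarrow> real" where
  "l2_norm M \<phi> = sqrt (LINT x|M. (cmod (\<phi> x))\<^sup>2)"

definition bounded_L2_op :: "'a measure \<Rightarrow> 'a op \<Rightarrow> bool" where
  "bounded_L2_op M T \<longleftrightarrow>
     (\<forall>\<phi>\<in>L2 M. T \<phi> \<in> L2 M) \<and>
     (\<forall>\<phi>\<in>L2 M. \<forall>\<psi>\<in>L2 M. ae_eq M \<phi> \<psi> \<longrightarrow> ae_eq M (T \<phi>) (T \<psi>)) \<and>
     (\<forall>\<phi>\<in>L2 M. \<forall>\<psi>\<in>L2 M. \<forall>a b. ae_eq M (T (\<lambda>x. a * \<phi> x + b * \<psi> x))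
                                         (\<lambda>x. a * T \<phi> x + b * T \<psi> x)) \<and>
     (\<exists>C. \<forall>\<phi>\<in>L2 M. l2_norm M (T \<phi>) \<le> C * l2_norm M \<phi>)"

definition op_eq :: "'a measure \<Rightarrow> 'a op \<Rightarrow> 'a op \<Rightarrow> bool" where
  "op_eq M T U \<longleftrightarrow> (\<forall>\<phi>\<in>L2 M. ae_eq M (T \<phi>) (U \<phi>))"

definition is_adjoint :: "'a measure \<Rightarrow> 'a op \<Rightarrow> 'a op \<Rightarrow> bool" where
  "is_adjoint M T T' \<longleftrightarrow> bounded_L2_op M T \<and> bounded_L2_op M T' \<and>
     (\<forall>\<phi>\<in>L2 M. \<forall>\<psi>\<in>L2 M. l2_inner M (T \<phi>) \<psi> = l2_inner M \<phi> (T' \<psi>))"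

definition op_zero :: "'a op" where "op_zero = (\<lambda>\<phi> x. 0)"
definition op_sub :: "'a op \<Rightarrow> 'a op \<Rightarrow> 'a op" where "op_sub T U = (\<lambda>\<phi> x. T \<phi> x - U \<phi> x)"
definition op_scale :: "complex \<Rightarrow> 'a op \<Rightarrow> 'a op" where "op_scale c T = (\<lambda>\<phi> x. c * T \<phi> x)"
definition op_sum :: "(nat \<Rightarrow> 'a op) \<Rightarrow> nat set \<Rightarrow> 'a op" where
  "op_sum T J = (\<lambda>\<phi> x. \<Sum>j\<in>J. T j \<phi> x)"
text \<open>Product (composition) of operators Q u, u in a finite set U, in increasing order of u
  (the order is irrelevant under relation (ii)); the empty product is the identity.\<close>
definition op_prod :: "(nat \<Rightarrow> 'a op) \<Rightarrow> nat set \<Rightarrow> 'a op" where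
  "op_prod Q U = foldr (\<circ>) (map Q (sorted_list_of_set U)) id"

text \<open>By the universal property of O_A, a (unital) *-homomorphism O_A -> B(L2(X,mu)) is the
  same as a family of operators S i (the images of the generators S_i) in B(L2), with
  adjoints Sstar i, satisfying the defining relations of O_A: each S i is a partial
  isometry and relations (i)-(iv) hold.\<close>
definition OA_representation :: "'a measure \<Rightarrow> (nat \<Rightarrow> nat \<Rightarrow> nat) \<Rightarrow> (nat \<Rightarrow> 'a op) \<Rightarrow> (nat \<Rightarrow> 'a op) \<Rightarrow> bool" where
  "OA_representation M A S Sstar \<longleftrightarrow>
     (\<forall>i. is_adjoint M (S i) (Sstar i)) \<and>
     (\<forall>i. op_eq M (S i \<circ> Sstar i \<circ> S i) (S i)) \<and>
     (\<forall>i j. i \<noteq> j \<longrightarrow> op_eq M (S i \<circ> Sstar i \<circ> S j \<circ> Sstar j) op_zero) \<and>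
     (\<forall>i j. op_eq M (Sstar i \<circ> S i \<circ> Sstar j \<circ> S j) (Sstar j \<circ> S j \<circ> Sstar i \<circ> S i)) \<and>
     (\<forall>i j. op_eq M (Sstar i \<circ> S i \<circ> S j \<circ> Sstar j) (op_scale (of_nat (A i j)) (S j \<circ> Sstar j))) \<and>
     (\<forall>U V. finite U \<and> finite V \<and> finite {j. Acoef A U V j \<noteq> 0} \<longrightarrow>
        op_eq M (op_prod (\<lambda>u. Sstar u \<circ> S u) U \<circ> op_prod (\<lambda>v. op_sub id (Sstar v \<circ> S v)) V)
                (op_sum (\<lambda>j. op_scale (of_nat (Acoef A U V j)) (S j \<circ> Sstar j)) {j. Acoef A U V j \<noteq> 0}))"

end

theory Submission
  imports Defs
begin

definition Sop :: "'a set \<Rightarrow> ('a \<Rightarrow> real) \<Rightarrow> ('a \<Rightarrow> 'a) \<Rightarrow> 'a op" where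
  "Sop R q F \<phi> x = complex_of_real (indicator R x * sqrt (q x)) * \<phi> (F x)"
definition Stop :: "'a set \<Rightarrow> ('a \<Rightarrow> real) \<Rightarrow> ('a \<Rightarrow> 'a) \<Rightarrow> 'a op" where
  "Stop D p f \<psi> x = complex_of_real (indicator D x * sqrt (p x)) * (if x \<in> D then \<psi> (f x) else 0)"

lemma L2_bound:
  assumes phi: "\<phi> \<in> L2 M" and m: "hh \<in> borel_measurable M"
    and le: "(\<integral>\<^sup>+ x. ennreal ((cmod (hh x))\<^sup>2) \<partial>M) \<le> (\<integral>\<^sup>+ x. ennreal ((cmod (\<phi> x))\<^sup>2) \<partial>M)"
  shows "hh \<in> L2 M \<and> l2_norm M hh \<le> l2_norm M \<phi>"
proof -
  have ig: "integrable M (\<lambda>x. (cmod (\<phi> x))\<^sup>2)" using phi unfolding L2_def by auto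
  have eg: "(\<integral>\<^sup>+ x. ennreal ((cmod (\<phi> x))\<^sup>2) \<partial>M) = ennreal (\<integral> x. (cmod (\<phi> x))\<^sup>2 \<partial>M)"
    using ig by (intro nn_integral_eq_integral) auto
  have hm: "(\<lambda>x. (cmod (hh x))\<^sup>2) \<in> borel_measurable M" using m by measurable
  have ih: "integrable M (\<lambda>x. (cmod (hh x))\<^sup>2)"
    unfolding integrable_iff_bounded using hm le eg by (auto simp: less_top[symmetric] top_unique)
  have eh: "(\<integral>\<^sup>+ x. ennreal ((cmod (hh x))\<^sup>2) \<partial>M) = ennreal (\<integral> x. (cmod (hh x))\<^sup>2 \<partial>M)"
    using ih by (intro nn_integral_eq_integral) auto
  have "(\<integral> x. (cmod (hh x))\<^sup>2 \<partial>M) \<le> (\<integral> x. (cmod (\<phi> x))\<^sup>2 \<partial>M)"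
    using le eg eh by (simp add: ennreal_le_iff integral_nonneg_AE)
  then show ?thesis using m ih unfolding L2_def l2_norm_def by auto
qed

lemma cnj_meas[measurable]: "g \<in> borel_measurable M \<Longrightarrow> (\<lambda>x. cnj (g x)) \<in> borel_measurable M"
  by (intro borel_measurable_continuous_on[where f=cnj]) (auto intro: continuous_intros)

lemma sq_aux: assumes "0 \<le> (a::real)" "0 \<le> b" "a * b = 1" shows "a * sqrt b = sqrt a"
proof -
  have "a * sqrt b = sqrt a * (sqrt a * sqrt b)" using assms(1) by (simp add: mult.assoc[symmetric])
  also have "\<dots> = sqrt a" using assms by (simp add: real_sqrt_mult[symmetric])
  finally show ?thesis .
qed

locale bsys1 =
  fixes M :: "'a measure" and D R :: "'a set" and f F :: "'a \<Rightarrow> 'a" and p q :: "'a \<Rightarrow> real"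
  assumes sf: "sigma_finite_measure M"
  and FM: "F \<in> measurable M M"
  and Fns: "\<forall>E\<in>sets M. emeasure M E = 0 \<longrightarrow> emeasure M (F -` E \<inter> space M) = 0"
  and Dm: "D \<in> sets M" and Rm: "R \<in> sets M"
  and fmeas: "f \<in> measurable (restrict_space M D) M"
  and fDR: "f ` D \<subseteq> R" and fDae: "emeasure M (R - f ` D) = 0" and fDsets: "f ` D \<in> sets M"
  and Ff: "AE x in M. x \<in> D \<longrightarrow> F (f x) = x"
  and RNp: "is_RN_deriv_on M D f p" and RNq: "is_RN_deriv_on M R F q"

locale bsys2 = bsys1 +
  fixes N assumes Nnull: "N \<in> null_sets M" and NF: "\<forall>x\<in>D - N. F (f x) = x"
begin

definition "D' = D - N"
definition "R' = f ` D'"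

lemma Dsp: "D \<subseteq> space M" using Dm sets.sets_into_space by blast
lemma Rsp: "R \<subseteq> space M" using Rm sets.sets_into_space by blast
lemma Nm: "N \<in> sets M" using Nnull by auto
lemma D'm: "D' \<in> sets M" unfolding D'_def using Dm Nm by auto
lemma D'D: "D' \<subseteq> D" unfolding D'_def by auto
lemma D'sp: "D' \<inter> space M = D'" using D'm sets.sets_into_space by blast
lemma Dsp2: "D \<inter> space M = D" using Dsp by blast

lemma p_meas[measurable]: "p \<in> borel_measurable M" using RNp unfolding is_RN_deriv_on_def by auto
lemma q_meas[measurable]: "q \<in> borel_measurable M" using RNq unfolding is_RN_deriv_on_def by auto
lemma p_nn: "0 \<le> p x" using RNp unfolding is_RN_deriv_on_def by auto
lemma q_nn: "0 \<le> q x" using RNq unfolding is_RN_deriv_on_def by auto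
lemma p_out: "x \<notin> D \<Longrightarrow> p x = 0" using RNp unfolding is_RN_deriv_on_def by auto
lemma q_out: "x \<notin> R \<Longrightarrow> q x = 0" using RNq unfolding is_RN_deriv_on_def by auto
lemma p_RN: "E \<in> sets M \<Longrightarrow> E \<subseteq> D \<Longrightarrow> f ` E \<in> sets M \<and>
   emeasure M (f ` E) = (\<integral>\<^sup>+ x. ennreal (p x) * indicator E x \<partial>M)"
  using RNp unfolding is_RN_deriv_on_def by auto
lemma q_RN: "E \<in> sets M \<Longrightarrow> E \<subseteq> R \<Longrightarrow> F ` E \<in> sets M \<and>
   emeasure M (F ` E) = (\<integral>\<^sup>+ x. ennreal (q x) * indicator E x \<partial>M)"
  using RNq unfolding is_RN_deriv_on_def by auto

lemma fD': "x \<in> D' \<Longrightarrow> F (f x) = x \<and> f x \<in> R' \<and> f x \<in> R"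
  using NF fDR unfolding D'_def R'_def by auto

lemma R'm: "R' \<in> sets M" unfolding R'_def using p_RN[OF D'm D'D] by auto
lemma R'R: "R' \<subseteq> R" unfolding R'_def using D'D fDR by auto

lemma fmeas': "f \<in> measurable (restrict_space M D') M"
  using measurable_restrict_mono[OF fmeas D'D] .

lemma null_D_N: "f ` (D \<inter> N) \<in> null_sets M"
proof -
  have s: "D \<inter> N \<in> sets M" using Dm Nm by auto
  have "(\<integral>\<^sup>+ x. ennreal (p x) * indicator (D \<inter> N) x \<partial>M) = (\<integral>\<^sup>+ x. 0 \<partial>M)"
    using AE_not_in[OF Nnull] by (intro nn_integral_cong_AE) (auto elim!: eventually_mono)
  then show ?thesis using p_RN[OF s] by auto
qed

lemma R_R'_null: "R - R' \<in> null_sets M"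
proof -
  have "R - R' \<subseteq> (R - f ` D) \<union> f ` (D \<inter> N)" unfolding R'_def D'_def by auto
  moreover have "(R - f ` D) \<union> f ` (D \<inter> N) \<in> null_sets M"
    using null_D_N fDae Rm fDsets by auto
  moreover have "R - R' \<in> sets M" using Rm R'm by auto
  ultimately show ?thesis using null_sets_subset by blast
qed

lemma D_D'_null: "D - D' \<in> null_sets M"
  using null_sets_subset[OF Nnull] Dm D'm unfolding D'_def by auto

lemma AE_D': "AE x in M. x \<in> D \<longrightarrow> x \<in> D'"
  using AE_not_in[OF D_D'_null] by (auto elim!: eventually_mono)

lemma AE_R': "AE x in M. x \<in> R \<longrightarrow> x \<in> R'"
  using AE_not_in[OF R_R'_null] by (auto elim!: eventually_mono)

lemma R'_inv: "x \<in> R' \<Longrightarrow> F x \<in> D' \<and> f (F x) = x"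
  unfolding R'_def using fD' by auto

lemma AE_R: "AE x in M. x \<in> R \<longrightarrow> F x \<in> D \<and> f (F x) = x"
  using AE_R' by (auto elim!: eventually_mono dest: R'_inv simp: D'_def)

lemma Fimg: "A \<in> sets M \<Longrightarrow> F ` (A \<inter> R') = f -` A \<inter> D'"
proof safe
  fix x assume "x \<in> A" "x \<in> R'"
  then show "F x \<in> f -` A" "F x \<in> D'" using R'_inv by auto
next
  fix y assume "y \<in> D'" "f y \<in> A"
  then show "y \<in> F ` (A \<inter> R')" using fD' by (metis IntI image_eqI)
qed

lemma dens_q: "density M q = distr (restrict_space M D') M f"
proof (rule measure_eqI)
  show "sets (density M q) = sets (distr (restrict_space M D') M f)" by simp
next
  fix A assume "A \<in> sets (density M q)"
  then have A: "A \<in> sets M" by simp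
  have "emeasure (density M q) A = (\<integral>\<^sup>+ x. ennreal (q x) * indicator A x \<partial>M)"
    using A by (simp add: emeasure_density)
  also have "\<dots> = (\<integral>\<^sup>+ x. ennreal (q x) * indicator (A \<inter> R') x \<partial>M)"
    using AE_R' by (intro nn_integral_cong_AE) (auto elim!: eventually_mono simp: q_out indicator_def)
  also have "\<dots> = emeasure M (F ` (A \<inter> R'))"
  proof -
    have "A \<inter> R' \<in> sets M" "A \<inter> R' \<subseteq> R" using A R'm R'R by auto
    from q_RN[OF this] show ?thesis by simp
  qed
  also have "\<dots> = emeasure M (f -` A \<inter> D')" using Fimg[OF A] by simp
  also have "\<dots> = emeasure (distr (restrict_space M D') M f) A"
    using A fmeas' D'm by (simp add: emeasure_distr emeasure_restrict_space space_restrict_space D'sp)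
  finally show "emeasure (density M q) A = emeasure (distr (restrict_space M D') M f) A" .
qed

lemma K1: assumes G: "G \<in> borel_measurable M"
  shows "(\<integral>\<^sup>+ x. ennreal (q x) * G x \<partial>M) = (\<integral>\<^sup>+ y. G (f y) * indicator D' y \<partial>M)"
proof -
  have "(\<integral>\<^sup>+ x. ennreal (q x) * G x \<partial>M) = integral\<^sup>N (density M q) G"
    using G by (simp add: nn_integral_density)
  also have "\<dots> = integral\<^sup>N (distr (restrict_space M D') M f) G" by (simp add: dens_q)
  also have "\<dots> = (\<integral>\<^sup>+ y. G (f y) \<partial>restrict_space M D')"
    using G fmeas' by (simp add: nn_integral_distr)
  also have "\<dots> = (\<integral>\<^sup>+ y. G (f y) * indicator D' y \<partial>M)"
    using D'm by (simp add: nn_integral_restrict_space D'sp)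
  finally show ?thesis .
qed

lemma K1L: fixes G :: "'a \<Rightarrow> complex" assumes G: "G \<in> borel_measurable M"
  shows "(\<integral> x. q x *\<^sub>R G x \<partial>M) = (\<integral> y. indicator D' y *\<^sub>R G (f y) \<partial>M)"
proof -
  have "(\<integral> x. q x *\<^sub>R G x \<partial>M) = integral\<^sup>L (density M q) G"
    using G q_nn by (simp add: integral_density)
  also have "\<dots> = integral\<^sup>L (distr (restrict_space M D') M f) G" by (simp add: dens_q)
  also have "\<dots> = (\<integral> y. G (f y) \<partial>restrict_space M D')"
    using G fmeas' by (simp add: integral_distr)
  also have "\<dots> = (\<integral> y. indicator D' y *\<^sub>R G (f y) \<partial>M)"
    using D'm by (simp add: integral_restrict_space D'sp)
  finally show ?thesis .
qed

lemma transport: assumes "AE y in M. P y" shows "AE x in M. x \<in> D \<longrightarrow> P (f x)"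
proof -
  obtain N2 where N2: "{x \<in> space M. \<not> P x} \<subseteq> N2" "emeasure M N2 = 0" "N2 \<in> sets M"
    using assms by (rule AE_E)
  have "emeasure M (f -` N2 \<inter> D') = emeasure (distr (restrict_space M D') M f) N2"
    using N2 fmeas' D'm by (simp add: emeasure_distr space_restrict_space D'sp emeasure_restrict_space)
  also have "\<dots> = emeasure (density M q) N2" by (simp add: dens_q)
  also have "\<dots> = 0" using N2 by (simp add: emeasure_density nn_integral_null_set null_setsI
       flip: nn_integral_set_ennreal)
  finally have z: "emeasure M (f -` N2 \<inter> D') = 0" .
  have m: "f -` N2 \<inter> D' \<in> sets M"
    using measurable_sets[OF fmeas' N2(3)] D'm by (simp add: space_restrict_space D'sp sets_restrict_space_iff)
  have "AE x in M. x \<notin> f -` N2 \<inter> D'" using z m by (intro AE_not_in) (auto simp: null_sets_def)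
  then show ?thesis using AE_D'
    apply eventually_elim
    using N2(1) fDR Rsp by auto
qed

lemma preD'm: "A \<in> sets M \<Longrightarrow> f -` A \<inter> D' \<in> sets M"
  using measurable_sets[OF fmeas'] D'm by (simp add: space_restrict_space D'sp sets_restrict_space_iff)

lemma CR': "AE x in M. x \<in> R' \<longrightarrow> q x * p (F x) = 1"
proof -
  interpret sigma_finite_measure M using sf .
  have "AE x in M. ennreal (q x * p (F x)) * indicator R' x = indicator R' x"
  proof (rule density_unique2)
    show "(\<lambda>x. ennreal (q x * p (F x)) * indicator R' x) \<in> borel_measurable M"
      using FM R'm by measurable
    show "(\<lambda>x. indicator R' x :: ennreal) \<in> borel_measurable M" using R'm by measurable
  next
    fix A assume A: "A \<in> sets M"
    have Gm: "(\<lambda>x. ennreal (p (F x)) * indicator (A \<inter> R') x) \<in> borel_measurable M"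
      using FM R'm A by measurable
    have "(\<integral>\<^sup>+ x\<in>A. ennreal (q x * p (F x)) * indicator R' x \<partial>M)
        = (\<integral>\<^sup>+ x. ennreal (q x) * (ennreal (p (F x)) * indicator (A \<inter> R') x) \<partial>M)"
      by (intro nn_integral_cong) (auto simp: indicator_def ennreal_mult q_nn p_nn)
    also have "\<dots> = (\<integral>\<^sup>+ y. ennreal (p (F (f y))) * indicator (A \<inter> R') (f y) * indicator D' y \<partial>M)"
      using K1[OF Gm] by simp
    also have "\<dots> = (\<integral>\<^sup>+ y. ennreal (p y) * indicator (f -` A \<inter> D') y \<partial>M)"
      by (intro nn_integral_cong) (auto simp: indicator_def dest: fD')
    also have "\<dots> = emeasure M (f ` (f -` A \<inter> D'))"
      using p_RN[OF preD'm[OF A]] D'D by (metis (no_types, lifting) inf_le2 order_trans)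
    also have "f ` (f -` A \<inter> D') = A \<inter> R'" unfolding R'_def by auto
    also have "emeasure M (A \<inter> R') = (\<integral>\<^sup>+ x\<in>A. indicator R' x \<partial>M)"
      using A R'm by (simp add: nn_integral_indicator[symmetric] indicator_inter_arith ac_simps)
    finally show "(\<integral>\<^sup>+ x\<in>A. ennreal (q x * p (F x)) * indicator R' x \<partial>M) = (\<integral>\<^sup>+ x\<in>A. indicator R' x \<partial>M)" .
  qed
  then show ?thesis by (auto elim!: eventually_mono simp: indicator_def)
qed

lemma CR: "AE x in M. x \<in> R \<longrightarrow> q x * p (F x) = 1"
  using CR' AE_R' by eventually_elim auto

abbreviation "S \<equiv> Sop R q F"
abbreviation "St \<equiv> Stop D p f"

lemma PS: "AE x in M. St (S \<phi>) x = indicator D x * \<phi> x"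
proof -
  have "AE x in M. x \<in> D \<longrightarrow> (f x \<in> R \<longrightarrow> q (f x) * p (F (f x)) = 1)" by (rule transport[OF CR])
  then show ?thesis using Ff
  proof eventually_elim
    case (elim x)
    show ?case
    proof (cases "x \<in> D")
      case True
      then have "q (f x) * p x = 1" "F (f x) = x" "f x \<in> R" using elim fDR by auto
      then have "sqrt (p x) * sqrt (q (f x)) = 1" by (metis mult.commute real_sqrt_mult real_sqrt_one)
      then show ?thesis using True \<open>F (f x) = x\<close> \<open>f x \<in> R\<close>
        by (simp add: Sop_def Stop_def mult.assoc[symmetric] flip: of_real_mult)
    qed (simp add: Stop_def)
  qed
qed

lemma SP: "AE x in M. S (St \<psi>) x = indicator R x * \<psi> x"
  using CR AE_R
proof eventually_elim
  case (elim x)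
  show ?case
  proof (cases "x \<in> R")
    case True
    then have "q x * p (F x) = 1" "F x \<in> D" "f (F x) = x" using elim by auto
    then have "sqrt (q x) * sqrt (p (F x)) = 1" by (metis real_sqrt_mult real_sqrt_one)
    then show ?thesis using True \<open>F x \<in> D\<close> \<open>f (F x) = x\<close>
      by (simp add: Sop_def Stop_def mult.assoc[symmetric] flip: of_real_mult)
  qed (simp add: Sop_def)
qed

lemma S_meas: assumes "\<phi> \<in> borel_measurable M" shows "S \<phi> \<in> borel_measurable M"
proof -
  have "(\<lambda>x. \<phi> (F x)) \<in> borel_measurable M" using measurable_compose[OF FM assms] .
  then show ?thesis unfolding Sop_def using Rm by measurable
qed

lemma St_meas: assumes "\<psi> \<in> borel_measurable M" shows "St \<psi> \<in> borel_measurable M"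
proof -
  have "(\<lambda>x. \<psi> (f x)) \<in> borel_measurable (restrict_space M D)"
    using measurable_compose[OF fmeas assms] .
  then have "(\<lambda>x. if x \<in> D then \<psi> (f x) else 0) \<in> borel_measurable M"
  proof -
    have "D \<inter> space M \<in> sets M" using Dsp2 Dm by simp
    from measurable_restrict_space_iff[OF this, where c=0 and N=borel and f="\<lambda>x. \<psi> (f x)"] \<open>(\<lambda>x. \<psi> (f x)) \<in> _\<close>
    show ?thesis by simp
  qed
  then show ?thesis unfolding Stop_def using Dm by measurable
qed

lemma S_bound: assumes "\<phi> \<in> borel_measurable M"
  shows "(\<integral>\<^sup>+ x. ennreal ((cmod (S \<phi> x))\<^sup>2) \<partial>M) \<le> (\<integral>\<^sup>+ x. ennreal ((cmod (\<phi> x))\<^sup>2) \<partial>M)"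
proof -
  have Gm: "(\<lambda>x. ennreal (indicator R x * (cmod (\<phi> (F x)))\<^sup>2)) \<in> borel_measurable M"
    using assms FM Rm by measurable
  have "(\<integral>\<^sup>+ x. ennreal ((cmod (S \<phi> x))\<^sup>2) \<partial>M)
      = (\<integral>\<^sup>+ x. ennreal (q x) * ennreal (indicator R x * (cmod (\<phi> (F x)))\<^sup>2) \<partial>M)"
    by (intro nn_integral_cong) (auto simp: Sop_def norm_mult power_mult_distrib q_nn indicator_def
        simp flip: ennreal_mult)
  also have "\<dots> = (\<integral>\<^sup>+ y. ennreal (indicator R (f y) * (cmod (\<phi> (F (f y))))\<^sup>2) * indicator D' y \<partial>M)"
    using K1[OF Gm] .
  also have "\<dots> \<le> (\<integral>\<^sup>+ x. ennreal ((cmod (\<phi> x))\<^sup>2) \<partial>M)"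
    by (intro nn_integral_mono) (auto simp: indicator_def dest: fD')
  finally show ?thesis .
qed

lemma St_bound: assumes "\<psi> \<in> borel_measurable M"
  shows "(\<integral>\<^sup>+ x. ennreal ((cmod (St \<psi> x))\<^sup>2) \<partial>M) \<le> (\<integral>\<^sup>+ x. ennreal ((cmod (\<psi> x))\<^sup>2) \<partial>M)"
proof -
  have Gm: "(\<lambda>x. ennreal (indicator R x * p (F x) * (cmod (\<psi> x))\<^sup>2)) \<in> borel_measurable M"
    using assms FM Rm by measurable
  have "(\<integral>\<^sup>+ x. ennreal ((cmod (St \<psi> x))\<^sup>2) \<partial>M)
      = (\<integral>\<^sup>+ y. ennreal (indicator R (f y) * p (F (f y)) * (cmod (\<psi> (f y)))\<^sup>2) * indicator D' y \<partial>M)"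
    using AE_D' NF fDR
    by (intro nn_integral_cong_AE) (auto elim!: eventually_mono simp: Stop_def norm_mult power_mult_distrib
        p_nn indicator_def D'_def dest: fD')
  also have "\<dots> = (\<integral>\<^sup>+ x. ennreal (q x) * ennreal (indicator R x * p (F x) * (cmod (\<psi> x))\<^sup>2) \<partial>M)"
    using K1[OF Gm] by simp
  also have "\<dots> = (\<integral>\<^sup>+ x. ennreal (indicator R x * (cmod (\<psi> x))\<^sup>2) \<partial>M)"
    using CR by (intro nn_integral_cong_AE) (auto elim!: eventually_mono simp: indicator_def q_nn
        mult.assoc[symmetric] simp flip: ennreal_mult')
  also have "\<dots> \<le> (\<integral>\<^sup>+ x. ennreal ((cmod (\<psi> x))\<^sup>2) \<partial>M)"
    by (intro nn_integral_mono) (auto simp: indicator_def)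
  finally show ?thesis .
qed

end

context bsys2 begin

lemma AE_F: assumes "AE y in M. P y" shows "AE x in M. P (F x)"
proof -
  obtain N2 where N2: "{x \<in> space M. \<not> P x} \<subseteq> N2" "emeasure M N2 = 0" "N2 \<in> sets M"
    using assms by (rule AE_E)
  have "F -` N2 \<inter> space M \<in> null_sets M" using Fns N2 measurable_sets[OF FM N2(3)] by auto
  then show ?thesis
    by (rule AE_I') (use N2(1) measurable_space[OF FM] in auto)
qed

lemma compf_meas: fixes G :: "'a \<Rightarrow> complex" assumes G: "G \<in> borel_measurable M"
  shows "(\<lambda>y. indicator D' y *\<^sub>R G (f y)) \<in> borel_measurable M"
proof -
  have a: "(\<lambda>x. G (f x)) \<in> borel_measurable (restrict_space M D')"
    using measurable_compose[OF fmeas' G] .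
  have "D' \<inter> space M \<in> sets M" using D'sp D'm by simp
  from measurable_restrict_space_iff[OF this, where c=0 and N=borel and f="\<lambda>x. G (f x)"] a
  have "(\<lambda>x. if x \<in> D' then G (f x) else 0) \<in> borel_measurable M" by simp
  also have "(\<lambda>x. if x \<in> D' then G (f x) else 0) = (\<lambda>y. indicator D' y *\<^sub>R G (f y))"
    by (auto simp: indicator_def)
  finally show ?thesis .
qed

lemma S_bdd: "bounded_L2_op M S"
  unfolding bounded_L2_op_def
proof (intro conjI ballI allI impI)
  fix \<phi> assume a: "\<phi> \<in> L2 M"
  then have m: "\<phi> \<in> borel_measurable M" by (simp add: L2_def)
  show "S \<phi> \<in> L2 M" using L2_bound[OF a S_meas[OF m] S_bound[OF m]] by simp
next
  fix \<phi> \<psi> assume "ae_eq M \<phi> \<psi>"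
  then show "ae_eq M (S \<phi>) (S \<psi>)" unfolding ae_eq_def
    by (rule AE_F[THEN eventually_mono]) (simp add: Sop_def)
next
  fix \<phi> \<psi> a b
  show "ae_eq M (S (\<lambda>x. a * \<phi> x + b * \<psi> x)) (\<lambda>x. a * S \<phi> x + b * S \<psi> x)"
    unfolding ae_eq_def Sop_def by (auto simp: algebra_simps)
next
  show "\<exists>C. \<forall>\<phi>\<in>L2 M. l2_norm M (S \<phi>) \<le> C * l2_norm M \<phi>"
  proof (rule exI[of _ 1], intro ballI)
    fix \<phi> assume a: "\<phi> \<in> L2 M"
    then have m: "\<phi> \<in> borel_measurable M" by (simp add: L2_def)
    show "l2_norm M (S \<phi>) \<le> 1 * l2_norm M \<phi>" using L2_bound[OF a S_meas[OF m] S_bound[OF m]] by simp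
  qed
qed

lemma St_bdd: "bounded_L2_op M St"
  unfolding bounded_L2_op_def
proof (intro conjI ballI allI impI)
  fix \<phi> assume a: "\<phi> \<in> L2 M"
  then have m: "\<phi> \<in> borel_measurable M" by (simp add: L2_def)
  show "St \<phi> \<in> L2 M" using L2_bound[OF a St_meas[OF m] St_bound[OF m]] by simp
next
  fix \<phi> \<psi> assume "ae_eq M \<phi> \<psi>"
  then show "ae_eq M (St \<phi>) (St \<psi>)" unfolding ae_eq_def
    by (rule transport[THEN eventually_mono]) (simp add: Stop_def)
next
  fix \<phi> \<psi> a b
  show "ae_eq M (St (\<lambda>x. a * \<phi> x + b * \<psi> x)) (\<lambda>x. a * St \<phi> x + b * St \<psi> x)"
    unfolding ae_eq_def Stop_def by (auto simp: algebra_simps)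
next
  show "\<exists>C. \<forall>\<phi>\<in>L2 M. l2_norm M (St \<phi>) \<le> C * l2_norm M \<phi>"
  proof (rule exI[of _ 1], intro ballI)
    fix \<phi> assume a: "\<phi> \<in> L2 M"
    then have m: "\<phi> \<in> borel_measurable M" by (simp add: L2_def)
    show "l2_norm M (St \<phi>) \<le> 1 * l2_norm M \<phi>" using L2_bound[OF a St_meas[OF m] St_bound[OF m]] by simp
  qed
qed

lemma adj_eq: assumes pm: "\<phi> \<in> borel_measurable M" and qm: "\<psi> \<in> borel_measurable M"
  shows "l2_inner M (S \<phi>) \<psi> = l2_inner M \<phi> (St \<psi>)"
proof -
  define G where "G x = complex_of_real (indicator R x * sqrt (p (F x))) * \<phi> (F x) * cnj (\<psi> x)" for x
  have pF: "(\<lambda>x. \<phi> (F x)) \<in> borel_measurable M" using measurable_compose[OF FM pm] .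
  have Gm: "G \<in> borel_measurable M" unfolding G_def using pF qm FM Rm by measurable
  have "l2_inner M (S \<phi>) \<psi> = (\<integral> x. q x *\<^sub>R G x \<partial>M)"
    unfolding l2_inner_def
  proof (rule integral_cong_AE)
    show "(\<lambda>x. S \<phi> x * cnj (\<psi> x)) \<in> borel_measurable M" using S_meas[OF pm] qm by measurable
    show "(\<lambda>x. q x *\<^sub>R G x) \<in> borel_measurable M" using Gm by measurable
    show "AE x in M. S \<phi> x * cnj (\<psi> x) = q x *\<^sub>R G x"
      using CR
    proof eventually_elim
      case (elim x)
      show ?case
      proof (cases "x \<in> R")
        case True
        then have "q x * sqrt (p (F x)) = sqrt (q x)" using elim q_nn p_nn sq_aux by blast
        then show ?thesis using True
          by (simp add: Sop_def G_def scaleR_conv_of_real mult.assoc[symmetric] flip: of_real_mult)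
      qed (simp add: Sop_def G_def)
    qed
  qed
  also have "\<dots> = (\<integral> y. indicator D' y *\<^sub>R G (f y) \<partial>M)" using K1L[OF Gm] .
  also have "\<dots> = l2_inner M \<phi> (St \<psi>)"
    unfolding l2_inner_def
  proof (rule integral_cong_AE)
    show "(\<lambda>y. indicator D' y *\<^sub>R G (f y)) \<in> borel_measurable M" using compf_meas[OF Gm] .
    show "(\<lambda>x. \<phi> x * cnj (St \<psi> x)) \<in> borel_measurable M" using St_meas[OF qm] pm by measurable
    show "AE x in M. indicator D' x *\<^sub>R G (f x) = \<phi> x * cnj (St \<psi> x)"
      using AE_D'
    proof eventually_elim
      case (elim x)
      show ?case
      proof (cases "x \<in> D'")
        case True
        then show ?thesis using fD'[OF True] D'D
          by (auto simp: Stop_def G_def)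
      next
        case False
        then show ?thesis using elim by (simp add: Stop_def)
      qed
    qed
  qed
  finally show ?thesis .
qed

end

context bsys1 begin

lemma all_facts: "bounded_L2_op M (Sop R q F) \<and> bounded_L2_op M (Stop D p f) \<and>
  (\<forall>\<phi>\<in>L2 M. \<forall>\<psi>\<in>L2 M. l2_inner M (Sop R q F \<phi>) \<psi> = l2_inner M \<phi> (Stop D p f \<psi>)) \<and>
  (\<forall>\<phi>. AE x in M. Stop D p f (Sop R q F \<phi>) x = indicator D x * \<phi> x) \<and>
  (\<forall>\<psi>. AE x in M. Sop R q F (Stop D p f \<psi>) x = indicator R x * \<psi> x)"
proof -
  obtain N where N: "\<And>x. x \<in> space M - N \<Longrightarrow> x \<in> D \<longrightarrow> F (f x) = x" "N \<in> null_sets M"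
    using AE_E3[OF Ff] by blast
  have "D \<subseteq> space M" using Dm sets.sets_into_space by blast
  then have "\<forall>x\<in>D - N. F (f x) = x" using N(1) by blast
  then interpret bsys2 M D R f F p q N by unfold_locales (use N(2) in auto)
  show ?thesis using S_bdd St_bdd adj_eq PS SP by (auto simp: L2_def)
qed

end

lemma op_prod_ae:
  assumes "\<forall>k\<in>set L. \<forall>\<psi>. AE x in M. Q k \<psi> x = c k x * \<psi> x"
  shows "AE x in M. foldr (\<circ>) (map Q L) id \<psi> x = (\<Prod>k\<leftarrow>L. c k x) * (\<psi> x :: complex)"
  using assms
proof (induction L arbitrary: \<psi>)
  case Nil show ?case by simp
next
  case (Cons a L)
  have 1: "AE x in M. Q a (foldr (\<circ>) (map Q L) id \<psi>) x = c a x * foldr (\<circ>) (map Q L) id \<psi> x"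
    using Cons.prems by auto
  have 2: "AE x in M. foldr (\<circ>) (map Q L) id \<psi> x = (\<Prod>k\<leftarrow>L. c k x) * \<psi> x"
    by (rule Cons.IH) (use Cons.prems in auto)
  have e: "foldr (\<circ>) (map Q (a#L)) id \<psi> = Q a (foldr (\<circ>) (map Q L) id \<psi>)" by simp
  from 1 2 show ?case unfolding e by eventually_elim (simp add: mult.assoc)
qed

lemma op_prod_set:
  assumes "finite U" "\<forall>k\<in>U. \<forall>\<psi>. AE x in M. Q k \<psi> x = c k x * \<psi> x"
  shows "AE x in M. op_prod Q U \<psi> x = (\<Prod>k\<in>U. c k x) * (\<psi> x :: complex)"
proof -
  have "AE x in M. foldr (\<circ>) (map Q (sorted_list_of_set U)) id \<psi> x
     = (\<Prod>k\<leftarrow>sorted_list_of_set U. c k x) * \<psi> x"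
    using assms by (intro op_prod_ae) auto
  moreover have "\<And>x. (\<Prod>k\<leftarrow>sorted_list_of_set U. c k x) = (\<Prod>k\<in>U. c k x)"
    by (metis assms(1) distinct_sorted_list_of_set set_sorted_list_of_set prod.distinct_set_conv_list)
  ultimately show ?thesis unfolding op_prod_def by simp
qed

lemma prod_ind: "finite U \<Longrightarrow> (\<Prod>u\<in>U. indicator (D u) x :: complex) = (if \<forall>u\<in>U. x \<in> D u then 1 else 0)"
proof (cases "\<forall>u\<in>U. x \<in> D u")
  case True then show ?thesis by (simp add: indicator_def)
next
  case False
  then obtain u where "u \<in> U" "x \<notin> D u" by auto
  moreover assume "finite U"
  ultimately show ?thesis using False by (auto intro!: prod_zero simp: indicator_def)
qed

lemma prod_ind2: "finite V \<Longrightarrow> (\<Prod>v\<in>V. 1 - indicator (D v) x :: complex) = (if \<forall>v\<in>V. x \<notin> D v then 1 else 0)"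
proof (cases "\<forall>v\<in>V. x \<notin> D v")
  case True then show ?thesis by (simp add: indicator_def)
next
  case False
  then obtain v where "v \<in> V" "x \<in> D v" by auto
  moreover assume "finite V"
  ultimately show ?thesis using False by (auto intro!: prod_zero simp: indicator_def)
qed

lemma sum_ind: assumes "finite J" "\<forall>i\<in>J. \<forall>j\<in>J. i \<noteq> j \<longrightarrow> \<not> (x \<in> R i \<and> x \<in> R j)"
  shows "(\<Sum>j\<in>J. indicator (R j) x :: complex) = (if x \<in> (\<Union>j\<in>J. R j) then 1 else 0)"
proof (cases "x \<in> (\<Union>j\<in>J. R j)")
  case True
  then obtain j0 where j0: "j0 \<in> J" "x \<in> R j0" by auto
  have "(\<Sum>j\<in>J. indicator (R j) x :: complex) = (\<Sum>j\<in>J. if j = j0 then 1 else 0)"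
    using assms(2) j0 by (intro sum.cong) (auto simp: indicator_def)
  also have "\<dots> = 1" using assms(1) j0 by (simp add: sum.delta)
  finally show ?thesis using True by simp
next
  case False then show ?thesis by (auto simp: indicator_def intro!: sum.neutral)
qed

lemma Acoef01: assumes "\<forall>i j. A i j \<in> {0, 1}" "finite U" "finite V"
  shows "Acoef A U V j = (if (\<forall>u\<in>U. A u j = 1) \<and> (\<forall>v\<in>V. A v j = 0) then 1 else 0)"
proof (cases "(\<forall>u\<in>U. A u j = 1) \<and> (\<forall>v\<in>V. A v j = 0)")
  case True then show ?thesis unfolding Acoef_def by simp
next
  case False
  then consider u where "u \<in> U" "A u j = 0" | v where "v \<in> V" "A v j = 1" using assms(1) by blast
  then show ?thesis
  proof cases
    case 1 then show ?thesis using False assms unfolding Acoef_def by (auto intro!: prod_zero)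
  next
    case 2
    have "(\<Prod>v\<in>V. 1 - A v j) = 0" using 2 assms(3) by (intro prod_zero) (auto intro!: bexI[of _ v])
    then show ?thesis using False unfolding Acoef_def by simp
  qed
qed

theorem mainTheorem2:
  fixes M :: "'a measure" and A :: "nat \<Rightarrow> nat \<Rightarrow> nat"
    and f :: "nat \<Rightarrow> 'a \<Rightarrow> 'a" and D R :: "nat \<Rightarrow> 'a set" and F :: "'a \<Rightarrow> 'a"
    and Phif Phiinv :: "nat \<Rightarrow> 'a \<Rightarrow> real"
  assumes "sigma_finite_measure M"
    and "\<forall>i j. A i j \<in> {0, 1}"
    and "branching_system M A f D R F Phif Phiinv"
  shows "\<exists>S Sstar. OA_representation M A S Sstar \<and>
           (\<forall>i. \<forall>\<phi>\<in>L2 M. ae_eq M (S i \<phi>)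
              (\<lambda>x. complex_of_real (indicator (R i) x * sqrt (Phiinv i x)) * \<phi> (F x)))"
proof -
  note bs0 = assms(3)[unfolded branching_system_def]
  have bs: "bsys1 M (D i) (R i) (f i) F (Phif i) (Phiinv i)" for i
    using assms(1) bs0 unfolding bsys1_def nonsingular_def ae_set_eq_def by auto
  define S where "S = (\<lambda>i. Sop (R i) (Phiinv i) F)"
  define St where "St = (\<lambda>i. Stop (D i) (Phif i) (f i))"
  have bS: "bounded_L2_op M (S i)" and bSt: "bounded_L2_op M (St i)"
    and adj: "\<forall>\<phi>\<in>L2 M. \<forall>\<psi>\<in>L2 M. l2_inner M (S i \<phi>) \<psi> = l2_inner M \<phi> (St i \<psi>)"
    and PS: "\<And>\<phi>. AE x in M. St i (S i \<phi>) x = indicator (D i) x * \<phi> x"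
    and SP: "\<And>\<psi>. AE x in M. S i (St i \<psi>) x = indicator (R i) x * \<psi> x" for i
    using bsys1.all_facts[OF bs[of i]] unfolding S_def St_def by auto
  have Dm: "D i \<in> sets M" and Rm: "R i \<in> sets M" for i using bs0 by auto
  have disj: "AE x in M. \<not> (x \<in> R i \<and> x \<in> R j)" if "i \<noteq> j" for i j
  proof -
    have "R i \<inter> R j \<in> null_sets M" using bs0 that Rm by auto
    from AE_not_in[OF this] show ?thesis by auto
  qed
  have A0: "AE x in M. \<not> (x \<in> R j \<and> x \<in> D i)" if "A i j = 0" for i j
  proof -
    have "R j \<inter> D i \<in> null_sets M" using bs0 that Rm Dm by auto
    from AE_not_in[OF this] show ?thesis by auto
  qed
  have A1: "AE x in M. x \<in> R j \<longrightarrow> x \<in> D i" if "A i j = 1" for i j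
  proof -
    have "R j - D i \<in> null_sets M" using bs0 that Rm Dm by auto
    from AE_not_in[OF this] show ?thesis by auto
  qed
  show ?thesis
  proof (intro exI conjI)
    show "\<forall>i. \<forall>\<phi>\<in>L2 M. ae_eq M (S i \<phi>)
              (\<lambda>x. complex_of_real (indicator (R i) x * sqrt (Phiinv i x)) * \<phi> (F x))"
      by (simp add: S_def Sop_def ae_eq_def)
    show "OA_representation M A S St" unfolding OA_representation_def
    proof (intro conjI allI impI)
      fix i show "is_adjoint M (S i) (St i)" unfolding is_adjoint_def using bS bSt adj by auto
    next
      fix i show "op_eq M (S i \<circ> St i \<circ> S i) (S i)" unfolding op_eq_def ae_eq_def
      proof
        fix \<phi> show "AE x in M. (S i \<circ> St i \<circ> S i) \<phi> x = S i \<phi> x"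
          using SP[of i "S i \<phi>"] by eventually_elim (simp add: S_def Sop_def indicator_def)
      qed
    next
      fix i j :: nat assume ij: "i \<noteq> j"
      show "op_eq M (S i \<circ> St i \<circ> S j \<circ> St j) op_zero" unfolding op_eq_def ae_eq_def
      proof
        fix \<phi> show "AE x in M. (S i \<circ> St i \<circ> S j \<circ> St j) \<phi> x = op_zero \<phi> x"
          using SP[of i "S j (St j \<phi>)"] SP[of j \<phi>] disj[OF ij]
          by eventually_elim (auto simp: op_zero_def indicator_def)
      qed
    next
      fix i j :: nat
      show "op_eq M (St i \<circ> S i \<circ> St j \<circ> S j) (St j \<circ> S j \<circ> St i \<circ> S i)" unfolding op_eq_def ae_eq_def
      proof
        fix \<phi> show "AE x in M. (St i \<circ> S i \<circ> St j \<circ> S j) \<phi> x = (St j \<circ> S j \<circ> St i \<circ> S i) \<phi> x"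
          using PS[of i "St j (S j \<phi>)"] PS[of j \<phi>] PS[of j "St i (S i \<phi>)"] PS[of i \<phi>]
          by eventually_elim (simp add: indicator_def)
      qed
    next
      fix i j :: nat
      show "op_eq M (St i \<circ> S i \<circ> S j \<circ> St j) (op_scale (of_nat (A i j)) (S j \<circ> St j))"
        unfolding op_eq_def ae_eq_def
      proof
        fix \<phi>
        have "A i j = 0 \<or> A i j = 1" using assms(2) by auto
        then show "AE x in M. (St i \<circ> S i \<circ> S j \<circ> St j) \<phi> x = op_scale (of_nat (A i j)) (S j \<circ> St j) \<phi> x"
        proof
          assume a: "A i j = 0"
          show ?thesis using PS[of i "S j (St j \<phi>)"] SP[of j \<phi>] A0[OF a]
            by eventually_elim (auto simp: op_scale_def a indicator_def)
        next
          assume a: "A i j = 1"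
          show ?thesis using PS[of i "S j (St j \<phi>)"] SP[of j \<phi>] A1[OF a]
            by eventually_elim (auto simp: op_scale_def a indicator_def)
        qed
      qed
    next
      fix U V :: "nat set"
      assume fin: "finite U \<and> finite V \<and> finite {j. Acoef A U V j \<noteq> 0}"
      define J where "J = {j. Acoef A U V j \<noteq> 0}"
      have Aco: "Acoef A U V j = (if (\<forall>u\<in>U. A u j = 1) \<and> (\<forall>v\<in>V. A v j = 0) then 1 else 0)" for j
        using Acoef01[OF assms(2)] fin by auto
      have JJ: "{j. Acoef A U V j = 1} = J" unfolding J_def using Aco by auto
      have finJ: "finite J" using fin J_def by auto
      define L0 where "L0 = space M \<inter> (\<Inter>u\<in>U. D u) \<inter> (\<Inter>v\<in>V. space M - D v)"
      have ae5: "ae_set_eq M L0 (\<Union>j\<in>J. R j)"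
      proof -
        have f1: "finite {j. Acoef A U V j = 1}" using finJ JJ by simp
        have "\<forall>U V. finite U \<and> finite V \<and> finite {j. Acoef A U V j = 1} \<longrightarrow>
          ae_set_eq M (space M \<inter> (\<Inter>u\<in>U. D u) \<inter> (\<Inter>v\<in>V. space M - D v))
                    (\<Union>j\<in>{j. Acoef A U V j = 1}. R j)" using bs0 by blast
        then have "ae_set_eq M L0 (\<Union>j\<in>{j. Acoef A U V j = 1}. R j)"
          unfolding L0_def using fin f1 by blast
        then show ?thesis unfolding JJ .
      qed
      have h5: "AE x in M. x \<in> L0 \<longleftrightarrow> x \<in> (\<Union>j\<in>J. R j)"
      proof -
        have "L0 - (\<Union>j\<in>J. R j) \<in> null_sets M" "(\<Union>j\<in>J. R j) - L0 \<in> null_sets M"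
          using ae5 unfolding ae_set_eq_def by auto
        from AE_not_in[OF this(1)] AE_not_in[OF this(2)] show ?thesis by eventually_elim auto
      qed
      have h4: "AE x in M. \<forall>i\<in>J. \<forall>j\<in>J. i \<noteq> j \<longrightarrow> \<not> (x \<in> R i \<and> x \<in> R j)"
        using finJ disj by (auto intro!: AE_finite_allI simp: eventually_mono)
      show "op_eq M (op_prod (\<lambda>u. St u \<circ> S u) U \<circ> op_prod (\<lambda>v. op_sub id (St v \<circ> S v)) V)
                (op_sum (\<lambda>j. op_scale (of_nat (Acoef A U V j)) (S j \<circ> St j)) {j. Acoef A U V j \<noteq> 0})"
        unfolding op_eq_def ae_eq_def J_def[symmetric]
      proof
        fix \<phi>
        have PU: "\<forall>k\<in>U. \<forall>\<psi>. AE x in M. (St k \<circ> S k) \<psi> x = indicator (D k) x * \<psi> x"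
          using PS by simp
        have QV: "\<forall>k\<in>V. \<forall>\<psi>. AE x in M. op_sub id (St k \<circ> S k) \<psi> x = (1 - indicator (D k) x) * \<psi> x"
          using PS by (auto simp: op_sub_def left_diff_distrib elim!: eventually_mono)
        have h1: "AE x in M. op_prod (\<lambda>u. St u \<circ> S u) U (op_prod (\<lambda>v. op_sub id (St v \<circ> S v)) V \<phi>) x
            = (\<Prod>k\<in>U. indicator (D k) x) * op_prod (\<lambda>v. op_sub id (St v \<circ> S v)) V \<phi> x"
          using op_prod_set[OF conjunct1[OF fin] PU] .
        have h2: "AE x in M. op_prod (\<lambda>v. op_sub id (St v \<circ> S v)) V \<phi> x
            = (\<Prod>k\<in>V. 1 - indicator (D k) x) * \<phi> x"
          using op_prod_set[OF conjunct1[OF conjunct2[OF fin]] QV] .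
        have h3: "AE x in M. \<forall>j\<in>J. S j (St j \<phi>) x = indicator (R j) x * \<phi> x"
          using finJ SP by (auto intro!: AE_finite_allI)
        show "AE x in M. (op_prod (\<lambda>u. St u \<circ> S u) U \<circ> op_prod (\<lambda>v. op_sub id (St v \<circ> S v)) V) \<phi> x =
                op_sum (\<lambda>j. op_scale (of_nat (Acoef A U V j)) (S j \<circ> St j)) J \<phi> x"
          using h1 h2 h3 h4 h5 AE_space
        proof eventually_elim
          case (elim x)
          have "op_sum (\<lambda>j. op_scale (of_nat (Acoef A U V j)) (S j \<circ> St j)) J \<phi> x
              = (\<Sum>j\<in>J. indicator (R j) x * \<phi> x)"
            unfolding op_sum_def op_scale_def using elim(3) JJ by (intro sum.cong) auto
          also have "\<dots> = (\<Sum>j\<in>J. indicator (R j) x) * \<phi> x" by (simp add: sum_distrib_right)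
          also have "\<dots> = (if x \<in> (\<Union>j\<in>J. R j) then 1 else 0) * \<phi> x"
            using sum_ind[OF finJ elim(4)] by simp
          also have "\<dots> = (\<Prod>k\<in>U. indicator (D k) x) * ((\<Prod>k\<in>V. 1 - indicator (D k) x) * \<phi> x)"
          proof -
            have "x \<in> L0 \<longleftrightarrow> (\<forall>u\<in>U. x \<in> D u) \<and> (\<forall>v\<in>V. x \<notin> D v)"
              using elim(6) unfolding L0_def by blast
            then have "x \<in> (\<Union>j\<in>J. R j) \<longleftrightarrow> (\<forall>u\<in>U. x \<in> D u) \<and> (\<forall>v\<in>V. x \<notin> D v)"
              using elim(5) by blast
            then show ?thesis using fin by (simp add: prod_ind prod_ind2)
          qed
          finally show ?case using elim(1,2) by simp
        qed
      qed
    qed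
  qed
qed

end
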